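(* Consider the sensor-network Kalman filtering model described in the context, and suppose that the network state process $\{\Xi(k)\}_{k\in\mathbb{N}_0}$ is a time-homogeneous Markov chain with transition probabilities $p_{ij}=\Pr\{\Xi(k+1)=j\mid \Xi(k)=i\}$, $i,j\in\mathbb{B}$, and that the power and bit-rate control laws are of the form $u_m(k)=\kappa_m(\Xi(k),h_1(k),\dots,h_M(k))$, $b_m(k)=\eta_m(\Xi(k),h_1(k),\dots,h_M(k))$ for (possibly nonlinear) mappings $\kappa_m,\eta_m$. For $i\in\mathbb{B}$ let $$\nu_i=\sum_{j\in\mathbb{B}}p_{ij}\Pr\{r(k)=0\mid \Xi(k)=j\},$$ the conditional probability that $C(k)$ does not have full column rank given $\Xi(k-1)=i$. If there exists $\rho\in[0,1)$ such that $$\max_{(i,k)\in\mathbb{B}\times\mathbb{N}_0}\nu_i\,\|A(k)\|^2\le\rho,$$ then the Kalman filter is exponentially bounded, i.e., there exist finite constants $\alpha,\beta$ and $\rho'\in[0,1)$ such that $\mathbf{E}\{\operatorname{tr}P(k\mid k-1)\}\le \alpha\rho'^k+\beta$ for all $k\in\mathbb{N}_0$.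
   Context: System: $x(k+1)=A(k)x(k)+w(k)$, $k\in\mathbb{N}_0$, $x(k)\in\mathbb{R}^n$, with $x(0)\sim\mathcal N(x_0,P_0)$ and $\{w(k)\}$ independent with $w(k)\sim\mathcal N(0,Q(k))$. Sensors $S_1,\dots,S_M$ measure $y_m(k)=C_mx(k)+v_m(k)$, $C_m\in\mathbb{R}^{l_m\times n}$, with $\{v_m(k)\}$ independent, $v_m(k)\sim\mathcal N(0,R_m(k))$, and the noises $w,v_1,\dots,v_M$ and $x(0)$ mutually independent. The sequences $\{A(k)\},\{Q(k)\},\{R_m(k)\}$ are deterministic, bounded and known at the gateway. $\|\cdot\|$ is the spectral norm. Network: a directed tree with vertices $S_0$ (the gateway, root), $S_1,\dots,S_M$; each $S_m$, $m\ge1$, has exactly one outgoing edge $\mathcal E_m=(S_m,\mathrm{parent}(S_m))$, and there is a unique path from $S_m$ to $S_0$, whose set of edges is denoted $\mathrm{edge}(\mathrm{path}(S_m))$. Network delays are neglected. Fading model: a network state process $\Xi(k)\in\mathbb{B}=\{1,\dots,|\mathbb{B}|\}$ (finite). Channel power gains $h_m(k)\ge0$ of links $\mathcal E_m$ have time-homogeneous conditional distributions given the network state, and for $(l,k)\neq(m,\ell)$, $h_l(k)$ and $h_m(\ell)$ are conditionally independent given $\Xi(k)=j,\Xi(\ell)=i$. Link success indicators $\gamma_m(k)\in\{0,1\}$ ($1$ iff transmission over $\mathcal E_m$ at time $k$ succeeds) satisfy $\Pr\{\gamma_m(k)=1\mid h_m(k)=h,u_m(k)=u,b_m(k)=b\}=f_m(hu,b)$,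 where $u_m(k)$ is the transmit power and $b_m(k)$ the bit-rate of $S_m$, and $f_m:\mathbb{R}_{\ge0}\times B\to[0,1]$ is increasing in its first and decreasing in its second argument. Under this model and the stated form of control laws, conditioned on the network states the link success variables $\gamma_m(k)$ are independent across $m$ and across time, with $\phi_{m|j}=\Pr\{\gamma_m(k)=1\mid\Xi(k)=j\}$ independent of $k$; the network, channel and dropout processes are independent of $x(0),w,v_m$. Estimator: $\theta_m(k)=\prod_{\mathcal E_i\in\mathrm{edge}(\mathrm{path}(S_m))}\gamma_i(k)$; $C(k)=[\theta_1(k)C_1;\dots;\theta_M(k)C_M]$ (stacked), $y(k)=[\theta_1(k)y_1(k);\dots;\theta_M(k)y_M(k)]$, $R(k)=\mathrm{diag}(R_1(k),\dots,R_M(k))$. The Kalman filter is $\hat x(k+1|k)=A(k)\hat x(k|k-1)+K(k)(y(k)-C(k)\hat x(k|k-1))$, $P(k+1|k)=A(k)P(k|k-1)A(k)^T+Q(k)-K(k)C(k)P(k|k-1)A(k)^T$, $K(k)=A(k)P(k|k-1)C(k)^T(C(k)P(k|k-1)C(k)^T+R(k))^{-1}$, with $P(0|-1)=P_0$, $\hat x(0|-1)=x_0$. Define $r(k)=1$ if $C(k)$ has full column rank and $r(k)=0$ otherwise. The Kalman filter is called exponentially bounded if there exist finite $\alpha,\beta$ and $\rho\in[0,1)$ with $\mathbf{E}\{\operatorname{tr}P(k|k-1)\}\le\alpha\rho^k+\beta$ for all $k\in\mathbb{N}_0$. *)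

theory Defs
  imports "HOL-Analysis.Analysis" "HOL-Probability.Probability"
begin

text \<open>Sensors are indexed by 1..M, the gateway by 0; par m is the head of the
 unique outgoing edge of sensor m.  The nodes (= edges E_i, identified with
 their tail S_i) on the path from S_m to the gateway S_0:\<close>
definition path_nodes :: "(nat \<Rightarrow> nat) \<Rightarrow> nat \<Rightarrow> nat set" where
  "path_nodes par m = {(par ^^ j) m | j. \<forall>j'\<le>j. (par ^^ j') m \<noteq> 0}"

definition is_tree :: "nat \<Rightarrow> (nat \<Rightarrow> nat) \<Rightarrow> bool" where
  "is_tree M par \<longleftrightarrow> (\<forall>m\<in>{1..M}. par m \<in> {0..M} \<and> (\<exists>j. (par ^^ j) m = 0))"

text \<open>theta_m given the set S of links E_i that succeed.\<close>
definition theta :: "(nat \<Rightarrow> nat) \<Rightarrow> nat set \<Rightarrow> nat \<Rightarrow> bool" where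
  "theta par S m \<longleftrightarrow> path_nodes par m \<subseteq> S"

text \<open>Stacked measurement matrix: Cfull stacks C_1;...;C_M, row r belonging to
 sensor sensor_of r; rows of sensor m are multiplied by theta_m.\<close>
definition stackedC :: "('l \<Rightarrow> nat) \<Rightarrow> (real^'n^'l) \<Rightarrow> (nat \<Rightarrow> bool) \<Rightarrow> real^'n^'l" where
  "stackedC sensor_of Cfull th = (\<chi> r. if th (sensor_of r) then Cfull $ r else 0)"

definition full_col_rank :: "real^'n^'l \<Rightarrow> bool" where
  "full_col_rank C \<longleftrightarrow> rank C = CARD('n)"

text \<open>Pr{r(k) = 0 | Xi(k) = j}: links succeed independently with probability
 phi m j given network state j.\<close>
definition prob_rank_def ::
  "nat \<Rightarrow> (nat \<Rightarrow> nat) \<Rightarrow> ('l \<Rightarrow> nat) \<Rightarrow> real^'n^'l \<Rightarrow> (nat \<Rightarrow> nat \<Rightarrow> real) \<Rightarrow> nat \<Rightarrow> real" where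
  "prob_rank_def M par sensor_of Cfull phi j =
     (\<Sum>S\<in>Pow {1..M}. (\<Prod>m\<in>{1..M}. if m \<in> S then phi m j else 1 - phi m j) *
        (if full_col_rank (stackedC sensor_of Cfull (theta par S)) then 0 else 1))"

definition nu ::
  "nat set \<Rightarrow> (nat \<Rightarrow> nat \<Rightarrow> real) \<Rightarrow> nat \<Rightarrow> (nat \<Rightarrow> nat) \<Rightarrow> ('l \<Rightarrow> nat) \<Rightarrow> real^'n^'l
     \<Rightarrow> (nat \<Rightarrow> nat \<Rightarrow> real) \<Rightarrow> nat \<Rightarrow> real" where
  "nu B p M par sensor_of Cfull phi i =
     (\<Sum>j\<in>B. p i j * prob_rank_def M par sensor_of Cfull phi j)"

text \<open>One step of the Riccati recursion P(k+1|k) from P(k|k-1).\<close>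
definition kf_step :: "real^'n^'n \<Rightarrow> real^'n^'n \<Rightarrow> real^'l^'l \<Rightarrow> real^'n^'l \<Rightarrow> real^'n^'n \<Rightarrow> real^'n^'n" where
  "kf_step A Q R C P =
     (let K = A ** P ** transpose C ** matrix_inv (C ** P ** transpose C + R)
      in A ** P ** transpose A + Q - K ** C ** P ** transpose A)"

fun kf_P :: "(nat \<Rightarrow> real^'n^'n) \<Rightarrow> (nat \<Rightarrow> real^'n^'n) \<Rightarrow> (nat \<Rightarrow> real^'l^'l) \<Rightarrow> (nat \<Rightarrow> real^'n^'l)
     \<Rightarrow> real^'n^'n \<Rightarrow> nat \<Rightarrow> real^'n^'n" where
  "kf_P A Q R C P0 0 = P0"
| "kf_P A Q R C P0 (Suc k) = kf_step (A k) (Q k) (R k) (C k) (kf_P A Q R C P0 k)"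

definition psd :: "real^'n^'n \<Rightarrow> bool" where
  "psd X \<longleftrightarrow> transpose X = X \<and> (\<forall>x. 0 \<le> x \<bullet> (X *v x))"

definition pd :: "real^'n^'n \<Rightarrow> bool" where
  "pd X \<longleftrightarrow> transpose X = X \<and> (\<forall>x. x \<noteq> 0 \<longrightarrow> 0 < x \<bullet> (X *v x))"

definition spec_norm :: "real^'n^'m \<Rightarrow> real" where
  "spec_norm X = onorm (\<lambda>x. X *v x)"

end

theory Submission
  imports Defs
begin


lemma dot_transpose: "(transpose A *v x) \<bullet> y = x \<bullet> (A *v (y::real^'n))"
  for A :: "real^'n^'m"
  by (simp add: dot_lmul_matrix)

lemma dot_transpose': "y \<bullet> (transpose A *v x) = (A *v y) \<bullet> (x::real^'m)"
  for A :: "real^'n^'m"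
  by (metis dot_transpose inner_commute)

lemma sym_form: "transpose X = X \<Longrightarrow> x \<bullet> (X *v y) = y \<bullet> (X *v (x::real^'n))"
  for X :: "real^'n^'n"
  by (metis dot_transpose inner_commute)

lemma psd_CS:
  fixes X :: "real^'n^'n"
  assumes "psd X"
  shows "(y \<bullet> (X *v x))^2 \<le> (y \<bullet> (X *v y)) * (x \<bullet> (X *v x))"
proof -
  define a where "a = x \<bullet> (X *v x)"
  define b where "b = y \<bullet> (X *v x)"
  define c where "c = y \<bullet> (X *v y)"
  have sym: "transpose X = X" and pos: "\<And>v. 0 \<le> v \<bullet> (X *v v)" using assms by (auto simp: psd_def)
  have exp: "0 \<le> a + 2*t*b + t^2*c" for t
  proof -
    have "0 \<le> (x + t *\<^sub>R y) \<bullet> (X *v (x + t *\<^sub>R y))" by (rule pos)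
    also have "\<dots> = a + t * (x \<bullet> (X *v y)) + t * b + t^2 * c"
      by (simp add: a_def b_def c_def algebra_simps inner_add_left inner_add_right power2_eq_square)
    also have "x \<bullet> (X *v y) = b" unfolding b_def by (rule sym_form[OF sym])
    finally show ?thesis by (simp add: algebra_simps)
  qed
  have c0: "0 \<le> c" unfolding c_def by (rule pos)
  show ?thesis
  proof (cases "c = 0")
    case True
    show ?thesis
    proof (rule ccontr)
      assume "\<not> ?thesis"
      hence "b \<noteq> 0" using True by (simp add: b_def c_def)
      have "0 \<le> a + 2*(-(a+1)/(2*b))*b" using exp[of "-(a+1)/(2*b)"] True by simp
      also have "\<dots> = -1" using \<open>b\<noteq>0\<close> by (simp add: field_simps)
      finally show False by simp
    qed
  next
    case False
    hence cp: "c > 0" using c0 by simp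
    have "0 \<le> a + 2*(-b/c)*b + (-b/c)^2*c" by (rule exp)
    also have "\<dots> = a - b^2/c" using cp by (simp add: field_simps power2_eq_square)
    finally have "b^2/c \<le> a" by simp
    hence "b^2 \<le> a * c" using cp by (simp add: field_simps)
    thus ?thesis by (simp add: a_def b_def c_def mult.commute)
  qed
qed

lemma spec_norm_nonneg: "0 \<le> spec_norm (X::real^'n^'m)"
  unfolding spec_norm_def by (rule onorm_pos_le) simp

lemma norm_mv_le: "norm (X *v x) \<le> spec_norm X * norm (x::real^'n)"
  for X :: "real^'n^'m"
  unfolding spec_norm_def by (rule onorm) simp

lemma form_le_norm: "x \<bullet> (X *v x) \<le> spec_norm X * (norm (x::real^'n))^2"
  for X :: "real^'n^'n"
proof -
  have "x \<bullet> (X *v x) \<le> norm x * norm (X *v x)" by (rule norm_cauchy_schwarz)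
  also have "\<dots> \<le> norm x * (spec_norm X * norm x)"
    by (rule mult_left_mono[OF norm_mv_le]) simp
  finally show ?thesis by (simp add: power2_eq_square algebra_simps)
qed

lemma norm_transpose_mv: "norm (transpose A *v x) \<le> spec_norm A * norm (x::real^'m)"
  for A :: "real^'n^'m"
proof -
  define z where "z = transpose A *v x"
  have "(norm z)^2 = z \<bullet> z" by (simp add: power2_norm_eq_inner)
  also have "\<dots> = x \<bullet> (A *v z)" unfolding z_def by (rule dot_transpose)
  also have "\<dots> \<le> norm x * norm (A *v z)" by (rule norm_cauchy_schwarz)
  also have "\<dots> \<le> norm x * (spec_norm A * norm z)"
    by (rule mult_left_mono[OF norm_mv_le]) simp
  finally have "norm z * norm z \<le> (spec_norm A * norm x) * norm z"
    by (simp add: power2_eq_square mult_ac)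
  hence "norm z \<le> spec_norm A * norm x"
  proof (cases "norm z = 0")
    case True thus ?thesis by (simp add: spec_norm_nonneg)
  next
    case False hence "0 < norm z" by simp
    thus ?thesis using \<open>norm z * norm z \<le> (spec_norm A * norm x) * norm z\<close>
      by (simp add: mult_le_cancel_right_pos)
  qed
  thus ?thesis by (simp add: z_def)
qed

lemma psd_norm_bound:
  fixes X :: "real^'n^'n"
  assumes "psd X" "0 \<le> b" "\<And>x. x \<bullet> (X *v x) \<le> b * (norm x)^2"
  shows "spec_norm X \<le> b"
  unfolding spec_norm_def
proof (rule onorm_le)
  fix x :: "real^'n"
  define z where "z = X *v x"
  define a where "a = (norm z)^2"
  have zz: "z \<bullet> (X *v x) = a" by (simp add: z_def a_def power2_norm_eq_inner)
  have pos: "0 \<le> v \<bullet> (X *v v)" for v using assms(1) by (simp add: psd_def)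
  have "a^2 \<le> (z \<bullet> (X *v z)) * (x \<bullet> (X *v x))"
    using psd_CS[OF assms(1), of z x] zz by simp
  also have "\<dots> \<le> (b * (norm z)^2) * (b * (norm x)^2)"
    by (rule mult_mono[OF assms(3) assms(3)]) (simp_all add: assms(2) pos)
  also have "\<dots> = a * (b * norm x)^2" by (simp add: a_def power2_eq_square mult_ac)
  finally have aa: "a * a \<le> a * (b * norm x)^2" by (simp add: power2_eq_square)
  have "a \<le> (b * norm x)^2"
  proof (cases "a = 0")
    case True thus ?thesis by simp
  next
    case False hence "0 < a" by (simp add: a_def)
    thus ?thesis using aa mult_le_cancel_left_pos[of a a "(b * norm x)^2"] by linarith
  qed
  hence "norm z \<le> b * norm x"
    unfolding a_def by (rule power2_le_imp_le) (simp_all add: assms(2))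
  thus "norm (X *v x) \<le> b * norm x" by (simp add: z_def)
qed

lemma trace_le_norm: "trace X \<le> real CARD('n) * spec_norm (X::real^'n^'n)"
proof -
  have le: "X $ i $ i \<le> spec_norm X" for i
  proof -
    have "X $ i $ i = (X *v axis i 1) $ i"
      by (simp add: matrix_vector_mul_component inner_axis)
    also have "\<dots> \<le> norm (X *v axis i 1)" using component_le_norm_cart by (rule abs_le_D1)
    also have "\<dots> \<le> spec_norm X * norm (axis i (1::real))" by (rule norm_mv_le)
    finally show ?thesis by simp
  qed
  have "trace X \<le> (\<Sum>i\<in>(UNIV::'n set). spec_norm X)" unfolding trace_def by (rule sum_mono, rule le)
  thus ?thesis by simp
qed



declare transpose_matrix_vector [simp del]


lemma transpose_add: "transpose (X + Y) = transpose X + transpose (Y::real^'n^'m)"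
  by (simp add: transpose_def vec_eq_iff)
lemma transpose_diff: "transpose (X - Y) = transpose X - transpose (Y::real^'n^'m)"
  by (simp add: transpose_def vec_eq_iff)

lemma pd_invertible:
  fixes S :: "real^'n^'n"
  assumes "\<And>v. v \<noteq> 0 \<Longrightarrow> 0 < v \<bullet> (S *v v)"
  shows "S ** matrix_inv S = mat 1 \<and> matrix_inv S ** S = mat 1"
proof -
  have "inj ((*v) S)"
  proof (rule injI)
    fix x y assume "S *v x = S *v y"
    hence "S *v (x - y) = 0" by (simp add: matrix_vector_mult_diff_distrib)
    hence "(x - y) \<bullet> (S *v (x - y)) = 0" by simp
    thus "x = y" using assms[of "x - y"] by (cases "x - y = 0") auto
  qed
  hence "\<exists>B. B ** S = mat 1" by (simp add: matrix_left_invertible_injective)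
  hence "invertible S" by (simp add: invertible_left_inverse)
  hence "\<exists>A'. S ** A' = mat 1 \<and> A' ** S = mat 1" by (simp add: invertible_def)
  thus ?thesis unfolding matrix_inv_def by (rule someI_ex)
qed

lemma transpose_inv_sym:
  fixes S :: "real^'n^'n"
  assumes "S ** Sinv = mat 1" "Sinv ** S = mat 1" "transpose S = S"
  shows "transpose Sinv = Sinv"
proof -
  have "transpose Sinv ** S = mat 1"
    using arg_cong[OF assms(1), of transpose] assms(3) by (simp add: matrix_transpose_mul)
  hence "transpose Sinv ** S ** Sinv = Sinv" by simp
  thus ?thesis using assms(1) by (simp add: matrix_mul_assoc[symmetric])
qed

lemma sym_of_forms:
  fixes X :: "real^'n^'n"
  assumes "\<And>x y. x \<bullet> (X *v y) = y \<bullet> (X *v x)"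
  shows "transpose X = X"
proof -
  have e: "X $ i $ j = axis i 1 \<bullet> (X *v axis j 1)" for i j
    by (simp add: inner_axis' matrix_vector_mul_component inner_axis)
  show ?thesis unfolding vec_eq_iff transpose_def
    using assms by (auto simp: e)
qed

lemma kf_sym:
  fixes A Q P :: "real^'n^'n" and R :: "real^'l^'l" and C :: "real^'n^'l"
  assumes Psym: "transpose P = P" and Qsym: "transpose Q = Q"
    and Sisym: "transpose (matrix_inv (C ** P ** transpose C + R)) = matrix_inv (C ** P ** transpose C + R)"
  shows "transpose (kf_step A Q R C P) = kf_step A Q R C P"
proof (rule sym_of_forms)
  define Sinv where "Sinv = matrix_inv (C ** P ** transpose C + R)"
  have ex: "kf_step A Q R C P *v x = A *v (P *v (transpose A *v x)) + Q *v x - A *v (P *v (transpose C *v (Sinv *v (C *v (P *v (transpose A *v x))))))" for x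
    unfolding kf_step_def Let_def Sinv_def
    by (simp add: matrix_vector_mult_add_rdistrib matrix_vector_mult_diff_rdistrib matrix_vector_mul_assoc matrix_mul_assoc)
  have PP: "a \<bullet> (P *v v) = (P *v a) \<bullet> v" for a v
    using sym_form[OF Psym, of a v] by (simp add: inner_commute)
  have f: "x \<bullet> (kf_step A Q R C P *v y) = (transpose A *v x) \<bullet> (P *v (transpose A *v y)) + x \<bullet> (Q *v y)
     - (C *v (P *v (transpose A *v x))) \<bullet> (Sinv *v (C *v (P *v (transpose A *v y))))" for x y
  proof -
    have "x \<bullet> (kf_step A Q R C P *v y) = (transpose A *v x) \<bullet> (P *v (transpose A *v y)) + x \<bullet> (Q *v y)
       - (transpose A *v x) \<bullet> (P *v (transpose C *v (Sinv *v (C *v (P *v (transpose A *v y))))))"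
      by (simp add: ex inner_add_right inner_diff_right dot_transpose)
    also have "(transpose A *v x) \<bullet> (P *v (transpose C *v (Sinv *v (C *v (P *v (transpose A *v y))))))
       = (C *v (P *v (transpose A *v x))) \<bullet> (Sinv *v (C *v (P *v (transpose A *v y))))"
      by (simp only: PP dot_transpose')
    finally show ?thesis .
  qed
  fix x y
  show "x \<bullet> (kf_step A Q R C P *v y) = y \<bullet> (kf_step A Q R C P *v x)"
    unfolding f
    using sym_form[OF Qsym, of x y] sym_form[OF Sisym[folded Sinv_def], of "C *v (P *v (transpose A *v x))" "C *v (P *v (transpose A *v y))"]
       sym_form[OF Psym, of "transpose A *v x" "transpose A *v y"]
    by simp
qed

lemma kf_mv: "kf_step A Q R C P *v x = A *v (P *v (transpose A *v x)) + Q *v x - A *v (P *v (transpose C *v (matrix_inv (C ** P ** transpose C + R) *v (C *v (P *v (transpose A *v x))))))"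
  unfolding kf_step_def Let_def
  by (simp add: matrix_vector_mult_add_rdistrib matrix_vector_mult_diff_rdistrib matrix_vector_mul_assoc matrix_mul_assoc)

lemma kf_step_facts:
  fixes A Q P :: "real^'n^'n" and R :: "real^'l^'l" and C :: "real^'n^'l"
  assumes P: "psd P" and Q: "psd Q" and R: "pd R"
  shows "psd (kf_step A Q R C P)"
    and "spec_norm (kf_step A Q R C P) \<le> (spec_norm A)^2 * spec_norm P + spec_norm Q"
    and "L ** C = mat 1 \<Longrightarrow>
         spec_norm (kf_step A Q R C P) \<le> (spec_norm A)^2 * (spec_norm L)^2 * spec_norm R + spec_norm Q"
proof -
  define S where "S = C ** P ** transpose C + R"
  define Sinv where "Sinv = matrix_inv S"
  have Psym: "transpose P = P" and Ppos: "\<And>v. 0 \<le> v \<bullet> (P *v v)" using P by (auto simp: psd_def)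
  have Qsym: "transpose Q = Q" and Qpos: "\<And>v. 0 \<le> v \<bullet> (Q *v v)" using Q by (auto simp: psd_def)
  have Rsym: "transpose R = R" and Rpos: "\<And>v. v \<noteq> 0 \<Longrightarrow> 0 < v \<bullet> (R *v v)" using R by (auto simp: pd_def)
  have Rpos': "0 \<le> v \<bullet> (R *v v)" for v using Rpos[of v] by (cases "v = 0") auto
  have Sv: "S *v v = C *v (P *v (transpose C *v v)) + R *v v" for v
    by (simp add: S_def matrix_vector_mult_add_rdistrib matrix_vector_mul_assoc matrix_mul_assoc)
  have CC: "v \<bullet> (C *v y) = (transpose C *v v) \<bullet> y" for v y
    by (simp add: dot_transpose)
  have Sform: "v \<bullet> (S *v v) = (transpose C *v v) \<bullet> (P *v (transpose C *v v)) + v \<bullet> (R *v v)" for v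
    by (simp add: Sv inner_add_right CC)
  have Spd: "v \<noteq> 0 \<Longrightarrow> 0 < v \<bullet> (S *v v)" for v
    using Sform[of v] Ppos[of "transpose C *v v"] Rpos[of v] by linarith
  have Spos: "0 \<le> v \<bullet> (S *v v)" for v using Spd[of v] by (cases "v = 0") auto
  have inv: "S ** Sinv = mat 1" "Sinv ** S = mat 1" using pd_invertible[OF Spd] by (auto simp: Sinv_def)
  have Ssym: "transpose S = S"
    by (simp add: S_def transpose_add matrix_transpose_mul Psym Rsym matrix_mul_assoc)
  have Sisym: "transpose Sinv = Sinv" by (rule transpose_inv_sym[OF inv Ssym])
  have form: "x \<bullet> (kf_step A Q R C P *v x) =
      (transpose A *v x) \<bullet> (P *v (transpose A *v x))
      - (C *v (P *v (transpose A *v x))) \<bullet> (Sinv *v (C *v (P *v (transpose A *v x))))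
      + x \<bullet> (Q *v x)" for x
  proof -
    define y where "y = transpose A *v x"
    define u where "u = C *v (P *v y)"
    define z where "z = Sinv *v u"
    have "kf_step A Q R C P *v x = A *v (P *v y) + Q *v x - A *v (P *v (transpose C *v z))"
      unfolding kf_mv y_def u_def z_def Sinv_def S_def ..
    hence "x \<bullet> (kf_step A Q R C P *v x) = y \<bullet> (P *v y) + x \<bullet> (Q *v x) - y \<bullet> (P *v (transpose C *v z))"
      by (simp add: inner_add_right inner_diff_right dot_transpose y_def)
    also have "y \<bullet> (P *v (transpose C *v z)) = u \<bullet> z"
    proof -
      have "y \<bullet> (P *v (transpose C *v z)) = (transpose C *v z) \<bullet> (P *v y)"
        by (rule sym_form[OF Psym])
      also have "\<dots> = z \<bullet> u" unfolding u_def by (rule dot_transpose)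
      finally show ?thesis by (simp only: inner_commute)
    qed
    finally show ?thesis by (simp add: y_def u_def z_def)
  qed
  have Sz: "S *v (Sinv *v u) = u" for u by (simp add: matrix_vector_mul_assoc inv)
  have F1: "0 \<le> y \<bullet> (P *v y) - (C *v (P *v y)) \<bullet> (Sinv *v (C *v (P *v y)))" for y
  proof -
    define u where "u = C *v (P *v y)"
    define z where "z = Sinv *v u"
    have Szu: "S *v z = u" by (simp add: z_def Sz)
    have zSz: "z \<bullet> (S *v z) = z \<bullet> u" by (simp add: Szu)
    have "0 \<le> (y - transpose C *v z) \<bullet> (P *v (y - transpose C *v z)) + z \<bullet> (R *v z)"
      using Ppos Rpos' by (simp add: add_nonneg_nonneg)
    also have "\<dots> = y \<bullet> (P *v y) - 2 * (z \<bullet> u) + z \<bullet> (S *v z)"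
    proof -
      have a: "y \<bullet> (P *v (transpose C *v z)) = z \<bullet> u"
      proof -
        have "y \<bullet> (P *v (transpose C *v z)) = (transpose C *v z) \<bullet> (P *v y)"
          by (rule sym_form[OF Psym])
        also have "\<dots> = z \<bullet> u" unfolding u_def by (rule dot_transpose)
        finally show ?thesis .
      qed
      have b: "(transpose C *v z) \<bullet> (P *v y) = z \<bullet> u"
        by (simp add: dot_transpose u_def)
      show ?thesis
        by (simp add: matrix_vector_mult_diff_distrib inner_diff_left inner_diff_right a b Sform)
    qed
    finally show ?thesis using zSz by (simp add: u_def z_def inner_commute[of "C *v (P *v y)"])
  qed
  have F2: "0 \<le> (C *v (P *v y)) \<bullet> (Sinv *v (C *v (P *v y)))" for y
    using Spos[of "Sinv *v (C *v (P *v y))"] by (simp add: Sz inner_commute[of "Sinv *v _"])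
  have F3: "y \<bullet> (P *v y) - (C *v (P *v y)) \<bullet> (Sinv *v (C *v (P *v y))) \<le> w \<bullet> (R *v w)"
    if yw: "transpose C *v w = y" for y w
  proof -
    define u where "u = C *v (P *v y)"
    define z where "z = Sinv *v u"
    have Szu: "S *v z = u" by (simp add: z_def Sz)
    have "0 \<le> (w - z) \<bullet> (S *v (w - z))" by (rule Spos)
    also have "\<dots> = w \<bullet> (S *v w) - 2 * (w \<bullet> u) + z \<bullet> u"
      using sym_form[OF Ssym, of z w]
      by (simp add: matrix_vector_mult_diff_distrib inner_diff_left inner_diff_right Szu inner_commute[of u z])
    also have "w \<bullet> (S *v w) = y \<bullet> (P *v y) + w \<bullet> (R *v w)" by (simp add: Sform yw)
    also have "w \<bullet> u = y \<bullet> (P *v y)" by (simp add: u_def CC yw)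
    finally show ?thesis by (simp add: u_def z_def inner_commute[of "C *v (P *v y)"])
  qed
  have sym: "transpose (kf_step A Q R C P) = kf_step A Q R C P"
    by (rule kf_sym[OF Psym Qsym Sisym[unfolded Sinv_def S_def]])
  show psd: "psd (kf_step A Q R C P)"
    unfolding psd_def using sym form F1 Qpos by (simp add: add_nonneg_nonneg)
  show "spec_norm (kf_step A Q R C P) \<le> (spec_norm A)^2 * spec_norm P + spec_norm Q"
  proof (rule psd_norm_bound[OF psd])
    show "0 \<le> (spec_norm A)^2 * spec_norm P + spec_norm Q" by (simp add: spec_norm_nonneg)
    fix x :: "real^'n"
    define y where "y = transpose A *v x"
    have "x \<bullet> (kf_step A Q R C P *v x) \<le> y \<bullet> (P *v y) + x \<bullet> (Q *v x)"
      using form[of x] F2[of y] by (simp add: y_def)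
    also have "\<dots> \<le> spec_norm P * (norm y)^2 + spec_norm Q * (norm x)^2"
      by (intro add_mono form_le_norm)
    also have "spec_norm P * (norm y)^2 \<le> spec_norm P * (spec_norm A * norm x)^2"
      unfolding y_def by (intro mult_left_mono power_mono norm_transpose_mv) (auto simp: spec_norm_nonneg)
    finally show "x \<bullet> (kf_step A Q R C P *v x) \<le> ((spec_norm A)^2 * spec_norm P + spec_norm Q) * (norm x)^2"
      by (simp add: algebra_simps power_mult_distrib)
  qed
  assume LC: "L ** C = mat 1"
  show "spec_norm (kf_step A Q R C P) \<le> (spec_norm A)^2 * (spec_norm L)^2 * spec_norm R + spec_norm Q"
  proof (rule psd_norm_bound[OF psd])
    show "0 \<le> (spec_norm A)^2 * (spec_norm L)^2 * spec_norm R + spec_norm Q" by (simp add: spec_norm_nonneg)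
    fix x :: "real^'n"
    define y where "y = transpose A *v x"
    define w where "w = transpose L *v y"
    have yw: "transpose C *v w = y"
    proof -
      have "transpose C ** transpose L = mat 1"
        using arg_cong[OF LC, of transpose] by (simp add: matrix_transpose_mul)
      thus ?thesis by (simp add: w_def matrix_vector_mul_assoc)
    qed
    have "x \<bullet> (kf_step A Q R C P *v x) \<le> w \<bullet> (R *v w) + x \<bullet> (Q *v x)"
      using form[of x] F3[OF yw] by (simp add: y_def)
    also have "\<dots> \<le> spec_norm R * (norm w)^2 + spec_norm Q * (norm x)^2"
      by (intro add_mono form_le_norm)
    also have "norm w \<le> spec_norm L * (spec_norm A * norm x)"
    proof -
      have "norm w \<le> spec_norm L * norm y" unfolding w_def by (rule norm_transpose_mv)
      also have "\<dots> \<le> spec_norm L * (spec_norm A * norm x)"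
        unfolding y_def by (intro mult_left_mono norm_transpose_mv) (auto simp: spec_norm_nonneg)
      finally show ?thesis .
    qed
    hence "spec_norm R * (norm w)^2 \<le> spec_norm R * (spec_norm L * (spec_norm A * norm x))^2"
      by (intro mult_left_mono power_mono) (auto simp: spec_norm_nonneg)
    finally show "x \<bullet> (kf_step A Q R C P *v x) \<le> ((spec_norm A)^2 * (spec_norm L)^2 * spec_norm R + spec_norm Q) * (norm x)^2"
      by (simp add: algebra_simps power_mult_distrib)
  qed
qed



definition Lst :: "nat set \<Rightarrow> 'b set \<Rightarrow> nat \<Rightarrow> (nat \<times> 'b) list set" where
  "Lst B Pw n = {v. length v = Suc n \<and> set v \<subseteq> B \<times> Pw}"

definition ph :: "(nat \<Rightarrow> nat \<Rightarrow> real) \<Rightarrow> nat \<Rightarrow> nat \<Rightarrow> nat set \<Rightarrow> real" where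
  "ph phi M j S = (\<Prod>m\<in>{1..M}. if m \<in> S then phi m j else 1 - phi m j)"

definition wt :: "(nat \<Rightarrow> real) \<Rightarrow> (nat \<Rightarrow> nat \<Rightarrow> real) \<Rightarrow> (nat \<Rightarrow> nat \<Rightarrow> real) \<Rightarrow> nat \<Rightarrow> nat
    \<Rightarrow> (nat \<times> nat set) list \<Rightarrow> real" where
  "wt pi0 p phi M n v = pi0 (fst (v!0)) * (\<Prod>k<n. p (fst (v!k)) (fst (v!Suc k)))
      * (\<Prod>k\<le>n. ph phi M (fst (v!k)) (snd (v!k)))"

lemma Lst_finite: "finite B \<Longrightarrow> finite Pw \<Longrightarrow> finite (Lst B Pw n)"
proof -
  assume "finite B" "finite Pw"
  hence "finite {xs. set xs \<subseteq> B \<times> Pw \<and> length xs = Suc n}"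
    by (intro finite_lists_length_eq) simp
  thus ?thesis unfolding Lst_def by (simp add: conj_commute)
qed

lemma Lst_0: "Lst B Pw 0 = (\<lambda>x. [x]) ` (B \<times> Pw)"
proof
  show "Lst B Pw 0 \<subseteq> (\<lambda>x. [x]) ` (B \<times> Pw)"
  proof
    fix v assume "v \<in> Lst B Pw 0"
    hence "length v = 1" "set v \<subseteq> B \<times> Pw" by (auto simp: Lst_def)
    then obtain x where "v = [x]" by (auto simp: length_Suc_conv)
    thus "v \<in> (\<lambda>x. [x]) ` (B \<times> Pw)" using \<open>set v \<subseteq> B \<times> Pw\<close> by auto
  qed
qed (auto simp: Lst_def)

lemma Lst_Suc: "Lst B Pw (Suc n) = (\<lambda>(v,x). v @ [x]) ` (Lst B Pw n \<times> (B \<times> Pw))"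
proof
  show "Lst B Pw (Suc n) \<subseteq> (\<lambda>(v,x). v @ [x]) ` (Lst B Pw n \<times> (B \<times> Pw))"
  proof
    fix v assume v: "v \<in> Lst B Pw (Suc n)"
    hence ne: "v \<noteq> []" by (auto simp: Lst_def)
    hence eq: "v = butlast v @ [last v]" by simp
    have "butlast v \<in> Lst B Pw n" using v by (auto simp: Lst_def dest: in_set_butlastD)
    moreover have "last v \<in> B \<times> Pw" using v ne by (auto simp: Lst_def)
    ultimately show "v \<in> (\<lambda>(v,x). v @ [x]) ` (Lst B Pw n \<times> (B \<times> Pw))"
      using eq by (auto intro!: image_eqI[where x="(butlast v, last v)"])
  qed
qed (auto simp: Lst_def)

lemma sum_Lst_Suc:
  "(\<Sum>v\<in>Lst B Pw (Suc n). f v) = (\<Sum>v\<in>Lst B Pw n. \<Sum>x\<in>B \<times> Pw. f (v @ [x]))"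
proof -
  have inj: "inj_on (\<lambda>(v,x). v @ [x]) (Lst B Pw n \<times> (B \<times> Pw))"
    by (auto simp: inj_on_def)
  have "(\<Sum>v\<in>Lst B Pw (Suc n). f v) = (\<Sum>y\<in>Lst B Pw n \<times> (B \<times> Pw). f ((\<lambda>(v,x). v @ [x]) y))"
    unfolding Lst_Suc by (rule sum.reindex[OF inj, unfolded comp_def])
  also have "\<dots> = (\<Sum>v\<in>Lst B Pw n. \<Sum>x\<in>B \<times> Pw. f (v @ [x]))"
    by (subst sum.cartesian_product) (simp add: case_prod_beta)
  finally show ?thesis .
qed

lemma sum_Lst_0: "(\<Sum>v\<in>Lst B Pw 0. f v) = (\<Sum>x\<in>B \<times> Pw. f [x])"
  unfolding Lst_0 by (rule sum.reindex[unfolded comp_def]) (simp add: inj_on_def)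

lemma sum_ph: "(\<Sum>S\<in>Pow {1..M}. ph phi M j S) = 1"
proof -
  have "(\<Prod>m\<in>{1..M}. phi m j + (1 - phi m j)) =
      (\<Sum>X\<in>Pow {1..M}. (\<Prod>m\<in>X. phi m j) * (\<Prod>m\<in>{1..M} - X. 1 - phi m j))"
    by (rule prod_add) simp
  also have "\<dots> = (\<Sum>S\<in>Pow {1..M}. ph phi M j S)"
  proof (rule sum.cong[OF refl])
    fix X assume "X \<in> Pow {1..M}"
    hence X: "X \<subseteq> {1..M}" by simp
    have "ph phi M j X = (\<Prod>m\<in>{1..M} \<inter> {m. m \<in> X}. phi m j) * (\<Prod>m\<in>{1..M} \<inter> - {m. m \<in> X}. 1 - phi m j)"
      unfolding ph_def by (rule prod.If_cases) simp
    also have "{1..M} \<inter> {m. m \<in> X} = X" using X by auto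
    also have "{1..M} \<inter> - {m. m \<in> X} = {1..M} - X" by auto
    finally show "(\<Prod>m\<in>X. phi m j) * (\<Prod>m\<in>{1..M} - X. 1 - phi m j) = ph phi M j X" by simp
  qed
  finally show ?thesis by simp
qed

lemma ph_nonneg: "(\<And>m. m \<in> {1..M} \<Longrightarrow> 0 \<le> phi m j \<and> phi m j \<le> 1) \<Longrightarrow> 0 \<le> ph phi M j S"
  unfolding ph_def by (intro prod_nonneg) auto

lemma sum_BP:
  "(\<Sum>x\<in>B \<times> Pow {1..M}. g (fst x) * ph phi M (fst x) (snd x)) = (\<Sum>j\<in>B. g j)"
proof -
  have "(\<Sum>x\<in>B \<times> Pow {1..M}. g (fst x) * ph phi M (fst x) (snd x))
      = (\<Sum>j\<in>B. \<Sum>S\<in>Pow {1..M}. g j * ph phi M j S)"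
    by (subst sum.cartesian_product) (simp add: case_prod_beta)
  also have "\<dots> = (\<Sum>j\<in>B. g j)"
    using sum_ph[of phi M] by (simp add: sum_distrib_left[symmetric])
  finally show ?thesis .
qed

lemma wt_snoc:
  assumes "length v = Suc n"
  shows "wt pi0 p phi M (Suc n) (v @ [x]) = wt pi0 p phi M n v * p (fst (v!n)) (fst x) * ph phi M (fst x) (snd x)"
proof -
  have a: "(v @ [x]) ! k = v ! k" if "k < Suc n" for k using that assms by (simp add: nth_append)
  have b: "(v @ [x]) ! Suc n = x" using assms by (simp add: nth_append)
  have p1: "(\<Prod>k<Suc n. p (fst ((v@[x])!k)) (fst ((v@[x])!Suc k))) =
      (\<Prod>k<n. p (fst (v!k)) (fst (v!Suc k))) * p (fst (v!n)) (fst x)"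
    using a b by (simp add: prod.lessThan_Suc)
  have p2: "(\<Prod>k\<le>Suc n. ph phi M (fst ((v@[x])!k)) (snd ((v@[x])!k))) =
      (\<Prod>k\<le>n. ph phi M (fst (v!k)) (snd (v!k))) * ph phi M (fst x) (snd x)"
    using a b by (simp add: prod.atMost_Suc)
  show ?thesis unfolding wt_def p1 p2 using a[of 0] by (simp add: mult_ac)
qed

lemma wt_0: "wt pi0 p phi M 0 [x] = pi0 (fst x) * ph phi M (fst x) (snd x)"
  by (simp add: wt_def)

lemma wt_nonneg:
  assumes "v \<in> Lst B (Pow {1..M}) n" "\<forall>i\<in>B. 0 \<le> pi0 i" "\<forall>i\<in>B. \<forall>j\<in>B. 0 \<le> p i j"
    "\<forall>m\<in>{1..M}. \<forall>j\<in>B. 0 \<le> phi m j \<and> phi m j \<le> 1"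
  shows "0 \<le> wt pi0 p phi M n v"
proof -
  have inB: "fst (v!k) \<in> B" if "k \<le> n" for k
  proof -
    have "k < length v" using assms(1) that by (simp add: Lst_def)
    hence "v!k \<in> set v" by (rule nth_mem)
    thus ?thesis using assms(1) by (auto simp: Lst_def)
  qed
  show ?thesis unfolding wt_def
    using assms inB
    by (intro mult_nonneg_nonneg prod_nonneg ph_nonneg) (auto simp: Suc_le_eq)
qed

lemma sum_wt:
  assumes "\<forall>i\<in>B. (\<Sum>j\<in>B. p i j) = 1" "(\<Sum>i\<in>B. pi0 i) = 1"
  shows "(\<Sum>v\<in>Lst B (Pow {1..M}) n. wt pi0 p phi M n v) = 1"
proof (induction n)
  case 0
  show ?case unfolding sum_Lst_0 wt_0 using sum_BP[of pi0 phi M B] assms(2) by simp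
next
  case (Suc n)
  have "(\<Sum>v\<in>Lst B (Pow {1..M}) (Suc n). wt pi0 p phi M (Suc n) v)
     = (\<Sum>v\<in>Lst B (Pow {1..M}) n. \<Sum>x\<in>B \<times> Pow {1..M}.
          (wt pi0 p phi M n v * p (fst (v!n)) (fst x)) * ph phi M (fst x) (snd x))"
    unfolding sum_Lst_Suc by (intro sum.cong refl) (simp add: wt_snoc Lst_def)
  also have "\<dots> = (\<Sum>v\<in>Lst B (Pow {1..M}) n. wt pi0 p phi M n v * (\<Sum>j\<in>B. p (fst (v!n)) j))"
  proof (intro sum.cong refl)
    fix v assume "v \<in> Lst B (Pow {1..M}) n"
    show "(\<Sum>x\<in>B \<times> Pow {1..M}. wt pi0 p phi M n v * p (fst (v!n)) (fst x) * ph phi M (fst x) (snd x))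
       = wt pi0 p phi M n v * (\<Sum>j\<in>B. p (fst (v!n)) j)"
      using sum_BP[where g="\<lambda>j. wt pi0 p phi M n v * p (fst (v!n)) j" and B=B and phi=phi and M=M]
      by (simp add: sum_distrib_left)
  qed
  also have "\<dots> = (\<Sum>v\<in>Lst B (Pow {1..M}) n. wt pi0 p phi M n v)"
  proof (intro sum.cong refl)
    fix v assume "v \<in> Lst B (Pow {1..M}) n"
    hence "v!n \<in> set v" "set v \<subseteq> B \<times> Pow {1..M}" by (auto simp: Lst_def)
    hence "fst (v!n) \<in> B" by auto
    thus "wt pi0 p phi M n v * (\<Sum>j\<in>B. p (fst (v!n)) j) = wt pi0 p phi M n v" using assms(1) by simp
  qed
  finally show ?case using Suc by simp
qed

lemma kf_P_cong: "(\<And>t. t < k \<Longrightarrow> C t = C' t) \<Longrightarrow> kf_P A Q R C P0 k = kf_P A Q R C' P0 k"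
  by (induction k) auto

lemma kf_P_psd:
  assumes "\<forall>k. psd (Q k)" "psd P0" "\<forall>k. pd (R k)"
  shows "psd (kf_P A Q R C P0 k)"
proof (induction k)
  case (Suc k)
  show ?case using assms by (simp add: kf_step_facts(1)[OF Suc.IH])
qed (use assms in simp)

lemma trace_psd_nonneg: "psd X \<Longrightarrow> 0 \<le> trace (X::real^'n^'n)"
proof -
  assume "psd X"
  have e: "X $ i $ i = axis i 1 \<bullet> (X *v axis i 1)" for i
    by (simp add: inner_axis' matrix_vector_mul_component inner_axis)
  have "0 \<le> X $ i $ i" for i
    unfolding e using \<open>psd X\<close> unfolding psd_def by blast
  thus ?thesis unfolding trace_def by (simp add: sum_nonneg)
qed



lemma int_le_sum:
  fixes \<Phi> :: "'w \<Rightarrow> 'a" and f :: "'w \<Rightarrow> real" and \<Omega> :: "'w measure"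
  assumes ps: "prob_space \<Omega>" and fin: "finite V"
    and sets: "\<And>v. v \<in> V \<Longrightarrow> {\<omega>\<in>space \<Omega>. \<Phi> \<omega> = v} \<in> sets \<Omega>"
    and tot: "(\<Sum>v\<in>V. measure \<Omega> {\<omega>\<in>space \<Omega>. \<Phi> \<omega> = v}) = 1"
    and fh: "\<And>\<omega>. \<omega> \<in> space \<Omega> \<Longrightarrow> \<Phi> \<omega> \<in> V \<Longrightarrow> f \<omega> = h (\<Phi> \<omega>)"
    and nn: "0 \<le> (\<Sum>v\<in>V. measure \<Omega> {\<omega>\<in>space \<Omega>. \<Phi> \<omega> = v} * h v)"
  shows "integral\<^sup>L \<Omega> f \<le> (\<Sum>v\<in>V. measure \<Omega> {\<omega>\<in>space \<Omega>. \<Phi> \<omega> = v} * h v)"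
proof -
  interpret prob_space \<Omega> by (rule ps)
  define Cy where "Cy v = {\<omega>\<in>space \<Omega>. \<Phi> \<omega> = v}" for v
  define g where "g \<omega> = (\<Sum>v\<in>V. indicator (Cy v) \<omega> *\<^sub>R h v)" for \<omega>
  have Cs: "v \<in> V \<Longrightarrow> Cy v \<in> sets \<Omega>" for v using sets by (simp add: Cy_def)
  have hb: "has_bochner_integral \<Omega> g (\<Sum>v\<in>V. measure \<Omega> (Cy v) *\<^sub>R h v)"
    unfolding g_def
  proof (rule has_bochner_integral_sum)
    fix v assume "v \<in> V"
    show "has_bochner_integral \<Omega> (\<lambda>\<omega>. indicator (Cy v) \<omega> *\<^sub>R h v) (measure \<Omega> (Cy v) *\<^sub>R h v)"
      by (rule has_bochner_integral_indicator) (use Cs[OF \<open>v\<in>V\<close>] emeasure_finite[of "Cy v"] in \<open>auto simp: less_top[symmetric]\<close>)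
  qed
  have gm: "g \<in> borel_measurable \<Omega>" using hb by (rule borel_measurable_has_bochner_integral)
  have ig: "integral\<^sup>L \<Omega> g = (\<Sum>v\<in>V. measure \<Omega> (Cy v) * h v)"
    using hb by (simp add: has_bochner_integral_integral_eq)
  define U where "U = (\<Union>v\<in>V. Cy v)"
  have "measure \<Omega> U = (\<Sum>v\<in>V. measure \<Omega> (Cy v))"
    unfolding U_def
    by (rule finite_measure_finite_Union) (use fin Cs in \<open>auto simp: disjoint_family_on_def Cy_def\<close>)
  hence "measure \<Omega> U = 1" using tot by (simp add: Cy_def)
  hence ae: "AE \<omega> in \<Omega>. \<omega> \<in> U" by (rule AE_prob_1)
  have eq: "AE \<omega> in \<Omega>. f \<omega> = g \<omega>"
    using ae
  proof (rule AE_mp, intro AE_I2 impI)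
    fix \<omega> assume "\<omega> \<in> space \<Omega>" "\<omega> \<in> U"
    hence inV: "\<Phi> \<omega> \<in> V" by (auto simp: U_def Cy_def)
    have "g \<omega> = (\<Sum>v\<in>V. if v = \<Phi> \<omega> then h v else 0)"
      unfolding g_def by (intro sum.cong refl) (auto simp: Cy_def indicator_def \<open>\<omega> \<in> space \<Omega>\<close>)
    also have "\<dots> = h (\<Phi> \<omega>)" using fin inV by simp
    finally show "f \<omega> = g \<omega>" using fh[OF \<open>\<omega> \<in> space \<Omega>\<close> inV] by simp
  qed
  show ?thesis
  proof (cases "integrable \<Omega> f")
    case True
    hence "integral\<^sup>L \<Omega> f = integral\<^sup>L \<Omega> g"
      by (intro integral_cong_AE eq gm) (simp add: borel_measurable_integrable)
    thus ?thesis using ig by (simp add: Cy_def)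
  next
    case False
    thus ?thesis using nn by (simp add: not_integrable_integral_eq)
  qed
qed

lemma cyl_sets:
  fixes Xi :: "nat \<Rightarrow> 'w \<Rightarrow> nat" and gamma :: "nat \<Rightarrow> nat \<Rightarrow> 'w \<Rightarrow> bool" and M :: nat
  assumes "\<forall>k. Xi k \<in> measurable \<Omega> (count_space UNIV)"
    and "\<forall>m k. gamma m k \<in> measurable \<Omega> (count_space UNIV)"
  shows "{\<omega>\<in>space \<Omega>. \<forall>k\<le>n. Xi k \<omega> = a k \<and> (\<forall>m\<in>{1..M}. gamma m k \<omega> = (b m k::bool))} \<in> sets \<Omega>"
proof -
  have p1: "Measurable.pred \<Omega> (\<lambda>x. Xi k x = a k)" for k
    by (rule pred_count_space_const1) (use assms in auto)
  have p2: "Measurable.pred \<Omega> (\<lambda>x. gamma m k x = b m k)" for m k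
    by (rule pred_count_space_const1) (use assms in auto)
  have p3: "Measurable.pred \<Omega> (\<lambda>x. \<forall>m\<in>{1..M}. gamma m k x = b m k)" for k
    by (rule pred_intros_finite(3)) (simp_all add: p2)
  have p4: "Measurable.pred \<Omega> (\<lambda>x. Xi k x = a k \<and> (\<forall>m\<in>{1..M}. gamma m k x = b m k))" for k
    by (rule pred_intros_logic(3)[OF p1 p3])
  have "Measurable.pred \<Omega> (\<lambda>x. \<forall>k\<in>{..n}. Xi k x = a k \<and> (\<forall>m\<in>{1..M}. gamma m k x = b m k))"
  proof (rule pred_intros_finite(3))
    show "finite {..n}" by simp
  next
    fix k assume "k \<in> {..n}"
    show "Measurable.pred \<Omega> (\<lambda>x. Xi k x = a k \<and> (\<forall>m\<in>{1..M}. gamma m k x = b m k))" by (rule p4)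
  qed
  hence "{x\<in>space \<Omega>. \<forall>k\<in>{..n}. Xi k x = a k \<and> (\<forall>m\<in>{1..M}. gamma m k x = b m k)} \<in> sets \<Omega>"
    by (simp only: pred_def)
  thus ?thesis by (simp only: Ball_def atMost_iff)
qed



theorem theorem1:
  fixes A Q :: "nat \<Rightarrow> real^'n^'n"
    and R :: "nat \<Rightarrow> real^'l^'l"
    and P0 :: "real^'n^'n"
    and Cfull :: "real^'n^'l" and sensor_of :: "'l \<Rightarrow> nat"
    and M nB :: nat and par :: "nat \<Rightarrow> nat"
    and p :: "nat \<Rightarrow> nat \<Rightarrow> real" and pi0 :: "nat \<Rightarrow> real"
    and phi :: "nat \<Rightarrow> nat \<Rightarrow> real"
    and \<Omega> :: "'w measure"
    and Xi :: "nat \<Rightarrow> 'w \<Rightarrow> nat" and gamma :: "nat \<Rightarrow> nat \<Rightarrow> 'w \<Rightarrow> bool"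
  assumes "prob_space \<Omega>"
    \<comment> \<open>system matrices: bounded, covariances\<close>
    and "\<exists>c. \<forall>k. spec_norm (A k) \<le> c \<and> spec_norm (Q k) \<le> c \<and> spec_norm (R k) \<le> c"
    and "\<forall>k. psd (Q k)" and "psd P0"
    and "\<forall>k. pd (R k)"
    and "\<forall>k r s. sensor_of r \<noteq> sensor_of s \<longrightarrow> R k $ r $ s = 0"
    \<comment> \<open>sensors and tree network\<close>
    and "\<forall>r. sensor_of r \<in> {1..M}" and "\<forall>m\<in>{1..M}. \<exists>r. sensor_of r = m"
    and "is_tree M par"
    \<comment> \<open>network state Markov chain on B = {1..nB} and link success probabilities\<close>
    and "nB \<ge> 1"
    and "\<forall>i\<in>{1..nB}. \<forall>j\<in>{1..nB}. 0 \<le> p i j" and "\<forall>i\<in>{1..nB}. (\<Sum>j\<in>{1..nB}. p i j) = 1"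
    and "\<forall>i\<in>{1..nB}. 0 \<le> pi0 i" and "(\<Sum>i\<in>{1..nB}. pi0 i) = 1"
    and "\<forall>m\<in>{1..M}. \<forall>j\<in>{1..nB}. 0 \<le> phi m j \<and> phi m j \<le> 1"
    and "\<forall>k. Xi k \<in> measurable \<Omega> (count_space UNIV)"
    and "\<forall>m k. gamma m k \<in> measurable \<Omega> (count_space UNIV)"
    \<comment> \<open>joint law: Xi Markov with transition p; given the network states, the link
        successes are independent over m and k with Pr{gamma_m(k)=1 | Xi(k)=j} = phi m j\<close>
    and "\<forall>n (\<xi>::nat \<Rightarrow> nat) (g::nat \<Rightarrow> nat \<Rightarrow> bool).
           measure \<Omega> {\<omega>\<in>space \<Omega>. \<forall>k\<le>n. Xi k \<omega> = \<xi> k \<and> (\<forall>m\<in>{1..M}. gamma m k \<omega> = g m k)}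
           = (if \<forall>k\<le>n. \<xi> k \<in> {1..nB}
              then pi0 (\<xi> 0) * (\<Prod>k<n. p (\<xi> k) (\<xi> (Suc k)))
                   * (\<Prod>k\<le>n. \<Prod>m\<in>{1..M}. if g m k then phi m (\<xi> k) else 1 - phi m (\<xi> k))
              else 0)"
    \<comment> \<open>the stability condition\<close>
    and "\<exists>\<rho>. 0 \<le> \<rho> \<and> \<rho> < 1 \<and>
           (\<forall>i\<in>{1..nB}. \<forall>k. nu {1..nB} p M par sensor_of Cfull phi i * (spec_norm (A k))\<^sup>2 \<le> \<rho>)"
  shows "\<exists>\<alpha> \<beta> \<rho>'. 0 \<le> \<rho>' \<and> \<rho>' < 1 \<and>
           (\<forall>k. (\<integral>\<omega>. trace (kf_P A Q R
                   (\<lambda>t. stackedC sensor_of Cfull (theta par {i\<in>{1..M}. gamma i t \<omega>})) P0 k) \<partial>\<Omega>)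
                \<le> \<alpha> * \<rho>' ^ k + \<beta>)"
proof -
  interpret ps: prob_space \<Omega> by (rule assms(1))
  obtain c where c: "\<forall>k. spec_norm (A k) \<le> c \<and> spec_norm (Q k) \<le> c \<and> spec_norm (R k) \<le> c"
    using assms(2) by blast
  have c0: "0 \<le> c" using c spec_norm_nonneg[of "A 0"] by (meson order_trans)
  obtain \<rho> where \<rho>0: "0 \<le> \<rho>" and \<rho>1: "\<rho> < 1"
    and \<rho>: "\<forall>i\<in>{1..nB}. \<forall>k. nu {1..nB} p M par sensor_of Cfull phi i * (spec_norm (A k))\<^sup>2 \<le> \<rho>"
    using assms(19) by blast
  define B where "B = {1..nB}"
  define Cm where "Cm S = stackedC sensor_of Cfull (theta par S)" for S
  define fr where "fr S = full_col_rank (Cm S)" for S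
  define Lf where "Lf S = (SOME L. L ** Cm S = mat 1)" for S
  have Lf: "Lf S ** Cm S = mat 1" if "fr S" for S
  proof -
    have "inj ((*v) (Cm S))" using that by (simp add: fr_def full_col_rank_def full_rank_injective)
    hence "\<exists>L. L ** Cm S = mat 1" by (simp add: matrix_left_invertible_injective)
    thus ?thesis unfolding Lf_def by (rule someI_ex)
  qed
  define KL where "KL = (\<Sum>S\<in>Pow {1..M}. (spec_norm (Lf S))^2)"
  have KL: "(spec_norm (Lf S))^2 \<le> KL" if "S \<in> Pow {1..M}" for S
    unfolding KL_def by (rule member_le_sum) (use that in auto)
  have KL0: "0 \<le> KL" unfolding KL_def by (simp add: sum_nonneg)
  define c1 where "c1 = c^2 * KL * c + c"
  have c1c: "c \<le> c1" using c0 KL0 by (simp add: c1_def)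
  define PP where "PP v k = kf_P A Q R (\<lambda>t. Cm (snd (v!t))) P0 k" for v :: "(nat \<times> nat set) list" and k
  have PPpsd: "psd (PP v k)" for v k
    unfolding PP_def by (rule kf_P_psd) (use assms(3,4,5) in auto)
  have step: "spec_norm (kf_step (A k) (Q k) (R k) (Cm S) X)
      \<le> (spec_norm (A k))^2 * (if fr S then 0 else 1) * spec_norm X + c1"
    if X: "psd X" and S: "S \<in> Pow {1..M}" for k S X
  proof (cases "fr S")
    case True
    have "spec_norm (kf_step (A k) (Q k) (R k) (Cm S) X)
        \<le> (spec_norm (A k))^2 * (spec_norm (Lf S))^2 * spec_norm (R k) + spec_norm (Q k)"
      by (rule kf_step_facts(3)[OF X _ _ Lf[OF True]]) (use assms(3,5) in auto)
    also have "\<dots> \<le> c^2 * KL * c + c"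
    proof -
      have a: "(spec_norm (A k))^2 \<le> c^2" using c spec_norm_nonneg[of "A k"] by (simp add: power_mono)
      have ab: "(spec_norm (A k))^2 * (spec_norm (Lf S))^2 \<le> c^2 * KL"
        by (rule mult_mono[OF a KL[OF S]]) (simp_all add: c0)
      have abr: "(spec_norm (A k))^2 * (spec_norm (Lf S))^2 * spec_norm (R k) \<le> c^2 * KL * c"
        by (rule mult_mono[OF ab]) (use c KL0 c0 spec_norm_nonneg in auto)
      show ?thesis using abr c by (intro add_mono) auto
    qed
    finally show ?thesis using True by (simp add: c1_def)
  next
    case False
    have "spec_norm (kf_step (A k) (Q k) (R k) (Cm S) X) \<le> (spec_norm (A k))^2 * spec_norm X + spec_norm (Q k)"
      by (rule kf_step_facts(2)[OF X]) (use assms(3,5) in auto)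
    thus ?thesis using False c c1c by (simp, smt)
  qed
  define L where "L n = Lst B (Pow {1..M}) n" for n
  define w where "w n v = wt pi0 p phi M n v" for n v
  define N where "N n v = spec_norm (PP v (Suc n))" for n v
  define E where "E n = (\<Sum>v\<in>L n. w n v * N n v)" for n
  have finB: "finite B" by (simp add: B_def)
  have finL: "finite (L n)" for n unfolding L_def by (rule Lst_finite) (simp_all add: finB)
  have w0: "0 \<le> w n v" if "v \<in> L n" for n v
    unfolding w_def by (rule wt_nonneg[OF that[unfolded L_def]]) (use assms(11,13,15) in \<open>auto simp: B_def\<close>)
  have sw: "(\<Sum>v\<in>L n. w n v) = 1" for n
    unfolding L_def w_def by (rule sum_wt) (use assms(12,14) in \<open>auto simp: B_def\<close>)
  have N0: "0 \<le> N n v" for n v by (simp add: N_def spec_norm_nonneg)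
  have E0: "0 \<le> E n" for n unfolding E_def by (intro sum_nonneg mult_nonneg_nonneg w0 N0)
  have inB: "fst (v!k) \<in> B" and inP: "snd (v!k) \<in> Pow {1..M}" if "v \<in> L n" "k \<le> n" for v n k
  proof -
    have "k < length v" using that by (simp add: L_def Lst_def)
    hence "v!k \<in> set v" by (rule nth_mem)
    hence "v!k \<in> B \<times> Pow {1..M}" using that(1) unfolding L_def Lst_def by blast
    thus "fst (v!k) \<in> B" "snd (v!k) \<in> Pow {1..M}" by (auto simp only: mem_Times_iff)
  qed
  have lenL: "length v = Suc n" if "v \<in> L n" for v n using that by (simp add: L_def Lst_def)
  have PPsnoc: "PP (v @ [x]) (Suc (Suc n)) = kf_step (A (Suc n)) (Q (Suc n)) (R (Suc n)) (Cm (snd x)) (PP v (Suc n))"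
    if "v \<in> L n" for v n x
  proof -
    have l: "length v = Suc n" by (rule lenL[OF that])
    have "PP (v @ [x]) (Suc n) = PP v (Suc n)"
      unfolding PP_def by (rule kf_P_cong) (simp add: nth_append l)
    moreover have "(v @ [x]) ! Suc n = x" by (simp add: nth_append l)
    ultimately show ?thesis by (simp add: PP_def)
  qed
  have pr: "prob_rank_def M par sensor_of Cfull phi j = (\<Sum>S\<in>Pow {1..M}. ph phi M j S * (if fr S then 0 else 1))" for j
    unfolding prob_rank_def_def ph_def fr_def Cm_def ..
  have nuid: "(\<Sum>x\<in>B \<times> Pow {1..M}. p i (fst x) * ph phi M (fst x) (snd x) * (if fr (snd x) then 0 else 1))
      = nu {1..nB} p M par sensor_of Cfull phi i" for i
  proof -
    have "(\<Sum>x\<in>B \<times> Pow {1..M}. p i (fst x) * ph phi M (fst x) (snd x) * (if fr (snd x) then 0 else 1))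
       = (\<Sum>j\<in>B. \<Sum>S\<in>Pow {1..M}. p i j * (ph phi M j S * (if fr S then 0 else 1)))"
      by (subst sum.cartesian_product) (simp add: case_prod_beta mult.assoc)
    also have "\<dots> = (\<Sum>j\<in>B. p i j * prob_rank_def M par sensor_of Cfull phi j)"
      by (simp add: pr sum_distrib_left)
    finally show ?thesis by (simp add: nu_def B_def)
  qed
  have one: "(\<Sum>x\<in>B \<times> Pow {1..M}. p i (fst x) * ph phi M (fst x) (snd x)) = 1" if "i \<in> B" for i
    using sum_BP[where g="p i" and B=B and phi=phi and M=M] assms(12) that by (simp add: B_def)
  have rec: "E (Suc n) \<le> \<rho> * E n + c1" for n
  proof -
    define a where "a = (spec_norm (A (Suc n)))^2"
    let ?X = "B \<times> Pow {1..M}"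
    let ?q = "\<lambda>i x. p i (fst x) * ph phi M (fst x) (snd x)"
    let ?I = "\<lambda>x. if fr (snd x) then 0 else 1::real"
    have "E (Suc n) = (\<Sum>v\<in>L n. \<Sum>x\<in>?X. w n v * ?q (fst (v!n)) x * N (Suc n) (v @ [x]))"
      unfolding E_def L_def sum_Lst_Suc
      by (intro sum.cong refl) (simp add: w_def wt_snoc Lst_def mult.assoc)
    also have "\<dots> \<le> (\<Sum>v\<in>L n. \<Sum>x\<in>?X. w n v * ?q (fst (v!n)) x * (a * ?I x * N n v + c1))"
    proof (rule sum_mono, rule sum_mono)
      fix v x assume v: "v \<in> L n" and x: "x \<in> ?X"
      have q0: "0 \<le> ?q (fst (v!n)) x"
        using assms(11,15) inB[OF v, of n] x
        by (intro mult_nonneg_nonneg ph_nonneg) (auto simp: B_def)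
      have "N (Suc n) (v @ [x]) \<le> a * ?I x * N n v + c1"
        unfolding N_def PPsnoc[OF v] a_def using step[OF PPpsd, of "snd x"] x by auto
      thus "w n v * ?q (fst (v!n)) x * N (Suc n) (v @ [x]) \<le> w n v * ?q (fst (v!n)) x * (a * ?I x * N n v + c1)"
        by (rule mult_left_mono) (intro mult_nonneg_nonneg w0[OF v] q0)
    qed
    also have "\<dots> = (\<Sum>v\<in>L n. w n v * (a * N n v * nu {1..nB} p M par sensor_of Cfull phi (fst (v!n)) + c1))"
    proof (rule sum.cong[OF refl])
      fix v assume v: "v \<in> L n"
      have "(\<Sum>x\<in>?X. w n v * ?q (fst (v!n)) x * (a * ?I x * N n v + c1))
          = (\<Sum>x\<in>?X. (w n v * a * N n v) * (?q (fst (v!n)) x * ?I x) + (w n v * c1) * ?q (fst (v!n)) x)"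
        by (intro sum.cong refl) (simp add: algebra_simps)
      also have "\<dots> = (w n v * a * N n v) * (\<Sum>x\<in>?X. ?q (fst (v!n)) x * ?I x) + (w n v * c1) * (\<Sum>x\<in>?X. ?q (fst (v!n)) x)"
        by (simp add: sum.distrib sum_distrib_left)
      also have "\<dots> = w n v * (a * N n v * nu {1..nB} p M par sensor_of Cfull phi (fst (v!n)) + c1)"
        using nuid[of "fst (v!n)"] one[OF inB[OF v, of n]] by (simp add: algebra_simps)
      finally show "(\<Sum>x\<in>?X. w n v * ?q (fst (v!n)) x * (a * ?I x * N n v + c1))
          = w n v * (a * N n v * nu {1..nB} p M par sensor_of Cfull phi (fst (v!n)) + c1)" .
    qed
    also have "\<dots> \<le> (\<Sum>v\<in>L n. w n v * (\<rho> * N n v + c1))"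
    proof (rule sum_mono)
      fix v assume v: "v \<in> L n"
      have "nu {1..nB} p M par sensor_of Cfull phi (fst (v!n)) * a \<le> \<rho>"
        using \<rho> inB[OF v, of n] by (simp add: a_def B_def)
      hence h: "(nu {1..nB} p M par sensor_of Cfull phi (fst (v!n)) * a) * N n v \<le> \<rho> * N n v"
        by (rule mult_right_mono) (rule N0)
      have eqn: "a * N n v * nu {1..nB} p M par sensor_of Cfull phi (fst (v!n)) = (nu {1..nB} p M par sensor_of Cfull phi (fst (v!n)) * a) * N n v"
        by (simp only: mult_ac)
      have "a * N n v * nu {1..nB} p M par sensor_of Cfull phi (fst (v!n)) \<le> \<rho> * N n v"
        unfolding eqn by (rule h)
      thus "w n v * (a * N n v * nu {1..nB} p M par sensor_of Cfull phi (fst (v!n)) + c1) \<le> w n v * (\<rho> * N n v + c1)"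
        by (intro mult_left_mono w0[OF v]) simp
    qed
    also have "\<dots> = \<rho> * E n + c1"
    proof -
      have "(\<Sum>v\<in>L n. c1 * w n v) = c1" using sw[of n] by (simp add: sum_distrib_left[symmetric])
      thus ?thesis by (simp add: E_def algebra_simps sum.distrib sum_distrib_left)
    qed
    finally show ?thesis .
  qed
  have Ebound: "E n \<le> \<rho>^n * E 0 + c1 / (1 - \<rho>)" for n
  proof (induction n)
    case 0 thus ?case using c0 KL0 \<rho>1 by (simp add: c1_def)
  next
    case (Suc n)
    have "E (Suc n) \<le> \<rho> * E n + c1" by (rule rec)
    also have "\<dots> \<le> \<rho> * (\<rho>^n * E 0 + c1 / (1 - \<rho>)) + c1" using Suc \<rho>0 by (simp add: mult_left_mono)
    also have "\<dots> = \<rho>^Suc n * E 0 + c1 / (1 - \<rho>)" using \<rho>1 by (simp add: field_simps)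
    finally show ?case .
  qed
  define G where "G k \<omega> = {i\<in>{1..M}. gamma i k \<omega>}" for k \<omega>
  define \<Phi> where "\<Phi> n \<omega> = map (\<lambda>k. (Xi k \<omega>, G k \<omega>)) [0..<Suc n]" for n \<omega>
  have \<Phi>nth: "\<Phi> n \<omega> ! t = (Xi t \<omega>, G t \<omega>)" if "t < Suc n" for n \<omega> t
    using that by (simp add: \<Phi>_def del: upt_Suc)
  have \<Phi>len: "length (\<Phi> n \<omega>) = Suc n" for n \<omega> by (simp add: \<Phi>_def del: upt_Suc)
  have cyl: "{\<omega>\<in>space \<Omega>. \<Phi> n \<omega> = v} =
      {\<omega>\<in>space \<Omega>. \<forall>k\<le>n. Xi k \<omega> = fst (v!k) \<and> (\<forall>m\<in>{1..M}. gamma m k \<omega> = (m \<in> snd (v!k)))}"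
    if v: "v \<in> L n" for n v
  proof (rule Collect_cong)
    fix \<omega>
    have l: "length v = Suc n" by (rule lenL[OF v])
    have "\<Phi> n \<omega> = v \<longleftrightarrow> (\<forall>k<Suc n. (Xi k \<omega>, G k \<omega>) = v!k)"
      by (simp add: list_eq_iff_nth_eq l \<Phi>len \<Phi>nth)
    also have "\<dots> \<longleftrightarrow> (\<forall>k\<le>n. Xi k \<omega> = fst (v!k) \<and> (\<forall>m\<in>{1..M}. gamma m k \<omega> = (m \<in> snd (v!k))))"
    proof -
      have gk: "G k \<omega> = snd (v!k) \<longleftrightarrow> (\<forall>m\<in>{1..M}. gamma m k \<omega> = (m \<in> snd (v!k)))" if "k \<le> n" for k
        using inP[OF v that] by (auto simp: G_def set_eq_iff)
      show ?thesis
        using gk by (auto simp: prod_eq_iff less_Suc_eq_le)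
    qed
    finally show "(\<omega> \<in> space \<Omega> \<and> \<Phi> n \<omega> = v) \<longleftrightarrow>
       (\<omega> \<in> space \<Omega> \<and> (\<forall>k\<le>n. Xi k \<omega> = fst (v!k) \<and> (\<forall>m\<in>{1..M}. gamma m k \<omega> = (m \<in> snd (v!k)))))"
      by simp
  qed
  have mcyl: "measure \<Omega> {\<omega>\<in>space \<Omega>. \<Phi> n \<omega> = v} = w n v" if v: "v \<in> L n" for n v
  proof -
    have h: "measure \<Omega> {\<omega>\<in>space \<Omega>. \<forall>k\<le>n. Xi k \<omega> = fst (v!k) \<and> (\<forall>m\<in>{1..M}. gamma m k \<omega> = (m \<in> snd (v!k)))}
        = (if \<forall>k\<le>n. fst (v!k) \<in> {1..nB}
              then pi0 (fst (v!0)) * (\<Prod>k<n. p (fst (v!k)) (fst (v!Suc k)))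
                   * (\<Prod>k\<le>n. \<Prod>m\<in>{1..M}. if m \<in> snd (v!k) then phi m (fst (v!k)) else 1 - phi m (fst (v!k)))
              else 0)"
      using assms(18)[rule_format, of n "\<lambda>k. fst (v!k)" "\<lambda>m k. m \<in> snd (v!k)"] by simp
    have cond: "\<forall>k\<le>n. fst (v!k) \<in> {1..nB}" using inB[OF v] by (simp add: B_def)
    show ?thesis unfolding cyl[OF v] h using cond by (simp add: w_def wt_def ph_def)
  qed
  have csets: "{\<omega>\<in>space \<Omega>. \<Phi> n \<omega> = v} \<in> sets \<Omega>" if v: "v \<in> L n" for n v
    unfolding cyl[OF v] by (rule cyl_sets[OF assms(16,17)])
  have intb: "(\<integral>\<omega>. trace (kf_P A Q R
                   (\<lambda>t. stackedC sensor_of Cfull (theta par {i\<in>{1..M}. gamma i t \<omega>})) P0 (Suc n)) \<partial>\<Omega>)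
      \<le> real CARD('n) * E n" for n
  proof -
    have "(\<integral>\<omega>. trace (kf_P A Q R
                   (\<lambda>t. stackedC sensor_of Cfull (theta par {i\<in>{1..M}. gamma i t \<omega>})) P0 (Suc n)) \<partial>\<Omega>)
        \<le> (\<Sum>v\<in>L n. measure \<Omega> {\<omega>\<in>space \<Omega>. \<Phi> n \<omega> = v} * trace (PP v (Suc n)))"
    proof (rule int_le_sum[OF assms(1) finL])
      show "{\<omega>\<in>space \<Omega>. \<Phi> n \<omega> = v} \<in> sets \<Omega>" if "v \<in> L n" for v by (rule csets[OF that])
      show "(\<Sum>v\<in>L n. measure \<Omega> {\<omega>\<in>space \<Omega>. \<Phi> n \<omega> = v}) = 1"
        using sw[of n] by (simp add: mcyl)
      show "0 \<le> (\<Sum>v\<in>L n. measure \<Omega> {\<omega>\<in>space \<Omega>. \<Phi> n \<omega> = v} * trace (PP v (Suc n)))"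
        by (intro sum_nonneg mult_nonneg_nonneg measure_nonneg trace_psd_nonneg PPpsd)
      fix \<omega> assume "\<omega> \<in> space \<Omega>" "\<Phi> n \<omega> \<in> L n"
      have "kf_P A Q R (\<lambda>t. stackedC sensor_of Cfull (theta par {i\<in>{1..M}. gamma i t \<omega>})) P0 (Suc n)
          = PP (\<Phi> n \<omega>) (Suc n)"
        unfolding PP_def by (rule kf_P_cong) (simp add: \<Phi>nth Cm_def G_def)
      thus "trace (kf_P A Q R (\<lambda>t. stackedC sensor_of Cfull (theta par {i\<in>{1..M}. gamma i t \<omega>})) P0 (Suc n))
          = trace (PP (\<Phi> n \<omega>) (Suc n))" by simp
    qed
    also have "\<dots> = (\<Sum>v\<in>L n. w n v * trace (PP v (Suc n)))"
      by (intro sum.cong refl) (simp add: mcyl)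
    also have "\<dots> \<le> (\<Sum>v\<in>L n. w n v * (real CARD('n) * N n v))"
    proof (rule sum_mono)
      fix v assume "v \<in> L n"
      show "w n v * trace (PP v (Suc n)) \<le> w n v * (real CARD('n) * N n v)"
        unfolding N_def by (rule mult_left_mono[OF trace_le_norm w0[OF \<open>v \<in> L n\<close>]])
    qed
    also have "\<dots> = real CARD('n) * E n" by (simp add: E_def sum_distrib_left mult_ac)
    finally show ?thesis .
  qed
  have int0: "(\<integral>\<omega>. trace (kf_P A Q R
                   (\<lambda>t. stackedC sensor_of Cfull (theta par {i\<in>{1..M}. gamma i t \<omega>})) P0 0) \<partial>\<Omega>) = trace P0"
    by (simp add: ps.prob_space)
  define \<rho>' where "\<rho>' = (1 + \<rho>) / 2"
  have r1: "0 < \<rho>'" "\<rho>' < 1" "\<rho> \<le> \<rho>'" using \<rho>0 \<rho>1 by (simp_all add: \<rho>'_def)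
  define \<alpha> where "\<alpha> = \<bar>trace P0\<bar> + real CARD('n) * E 0 / \<rho>'"
  define \<beta> where "\<beta> = real CARD('n) * (c1 / (1 - \<rho>))"
  have \<beta>0: "0 \<le> \<beta>" using c0 KL0 \<rho>1 by (simp add: \<beta>_def c1_def)
  have a0: "0 \<le> real CARD('n) * E 0 / \<rho>'" using E0[of 0] r1 by simp
  show ?thesis
  proof (intro exI conjI allI)
    show "0 \<le> \<rho>'" "\<rho>' < 1" using r1 by simp_all
    fix k
    show "(\<integral>\<omega>. trace (kf_P A Q R
                   (\<lambda>t. stackedC sensor_of Cfull (theta par {i\<in>{1..M}. gamma i t \<omega>})) P0 k) \<partial>\<Omega>)
                \<le> \<alpha> * \<rho>' ^ k + \<beta>"
    proof (cases k)
      case 0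
      have "trace P0 \<le> \<alpha> * \<rho>' ^ 0 + \<beta>"
        using \<beta>0 a0 abs_ge_self[of "trace P0"] by (simp add: \<alpha>_def)
      thus ?thesis unfolding 0 int0 .
    next
      case (Suc n)
      have "real CARD('n) * E n \<le> real CARD('n) * (\<rho>^n * E 0 + c1 / (1 - \<rho>))"
        by (rule mult_left_mono[OF Ebound]) simp
      also have "\<dots> = (real CARD('n) * E 0) * \<rho>^n + \<beta>" by (simp add: \<beta>_def algebra_simps)
      also have "\<dots> \<le> (real CARD('n) * E 0) * \<rho>'^n + \<beta>"
        using E0[of 0] \<rho>0 r1 by (intro add_mono mult_left_mono power_mono) simp_all
      also have "(real CARD('n) * E 0) * \<rho>'^n = (real CARD('n) * E 0 / \<rho>') * \<rho>'^Suc n"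
        using r1 by (simp add: field_simps)
      also have "\<dots> \<le> \<alpha> * \<rho>'^Suc n"
        using r1 by (intro mult_right_mono) (simp_all add: \<alpha>_def)
      finally show ?thesis using intb[of n] Suc by simp
    qed
  qed
qed


end
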